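(* Let $\beta>0$ and let $E'=\{h_1,\dots,h_L\}\subset\mathbb R$ with $2\le L<\infty$. For $m\in[-1,1]$ define $\hat B(m)\in\mathbb R^L$ by $$\hat B(m)_i=\log\frac{\cosh(\beta m+h_i)}{\cosh h_i}-\frac1L\sum_{j=1}^L\log\frac{\cosh(\beta m+h_j)}{\cosh h_j},\qquad i=1,\dots,L.$$ Then the map $m\mapsto\hat B(m)$ is injective.
   Context: This is the stability vector $\hat B_{\nu_m}$ of the mean-field random-field Ising model with $F(\nu)=-\beta(\nu(+)^2+\nu(-)^2)$, local measures $\alpha[h](\sigma)=e^{h\sigma}/(2\cosh h)$ for $\sigma\in\{-1,+1\}$, evaluated at the measure $\nu_m$ on $\{-1,+1\}$ with mean $m$. *)

theory Defs
  imports Complex_Main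
begin

definition Bhat :: "real \<Rightarrow> (nat \<Rightarrow> real) \<Rightarrow> nat \<Rightarrow> real \<Rightarrow> nat \<Rightarrow> real" where
  "Bhat \<beta> h L m i =
     ln (cosh (\<beta> * m + h i) / cosh (h i))
     - (1 / real L) * (\<Sum>j<L. ln (cosh (\<beta> * m + h j) / cosh (h j)))"

end

theory Submission
  imports Defs
begin

lemma cosh_key:
  fixes x1 x2 a b :: real
  assumes "a \<noteq> b" and "cosh (x1+a) * cosh (x2+b) = cosh (x2+a) * cosh (x1+b)"
  shows "x1 = x2"
proof -
  have p: "\<And>u v::real. cosh u * cosh v = (cosh (u+v) + cosh (u-v))/2"
    by (simp add: cosh_add cosh_diff)
  have "cosh ((a-b) + (x1-x2)) = cosh ((a-b) - (x1-x2))"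
    using assms(2) p[of "x1+a" "x2+b"] p[of "x2+a" "x1+b"]
    by (simp add: algebra_simps)
  hence "sinh (a-b) * sinh (x1-x2) = 0"
    unfolding cosh_add cosh_diff by simp
  thus ?thesis using assms(1) by simp
qed

theorem mainTheorem5:
  fixes \<beta> :: real and h :: "nat \<Rightarrow> real" and L :: nat
  assumes "\<beta> > 0" and "2 \<le> L" and "inj_on h {..<L}"
  shows "\<forall>m1\<in>{-1..1}. \<forall>m2\<in>{-1..1}.
           (\<forall>i<L. Bhat \<beta> h L m1 i = Bhat \<beta> h L m2 i) \<longrightarrow> m1 = m2"
proof (intro ballI impI)
  fix m1 m2 :: real
  assume eq: "\<forall>i<L. Bhat \<beta> h L m1 i = Bhat \<beta> h L m2 i"
  have ab: "h 0 \<noteq> h 1" using assms(2,3) unfolding inj_on_def by (metis One_nat_def lessThan_iff less_2_cases_iff order_less_le_trans zero_neq_one pos2 one_less_numeral_iff semiring_norm(76))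
  have e0: "Bhat \<beta> h L m1 0 = Bhat \<beta> h L m2 0" and e1: "Bhat \<beta> h L m1 1 = Bhat \<beta> h L m2 1"
    using eq assms(2) by auto
  define f where "f = (\<lambda>m i. ln (cosh (\<beta> * m + h i)))"
  have lq: "\<And>m i. ln (cosh (\<beta> * m + h i) / cosh (h i)) = f m i - ln (cosh (h i))"
    unfolding f_def by (simp add: ln_div)
  have "f m1 0 - f m1 1 = f m2 0 - f m2 1"
    using e0 e1 unfolding Bhat_def lq by linarith
  hence "ln (cosh (\<beta> * m1 + h 0) / cosh (\<beta> * m1 + h 1)) = ln (cosh (\<beta> * m2 + h 0) / cosh (\<beta> * m2 + h 1))"
    unfolding f_def by (simp add: ln_div)
  hence "cosh (\<beta> * m1 + h 0) / cosh (\<beta> * m1 + h 1) = cosh (\<beta> * m2 + h 0) / cosh (\<beta> * m2 + h 1)"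
    by (simp add: ln_inj_iff)
  hence "cosh (\<beta> * m1 + h 0) * cosh (\<beta> * m2 + h 1) = cosh (\<beta> * m2 + h 0) * cosh (\<beta> * m1 + h 1)"
    by (simp add: divide_simps)
  hence "\<beta> * m1 = \<beta> * m2" using cosh_key[OF ab] by blast
  thus "m1 = m2" using assms(1) by simp
qed

end
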